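(* Let $\Sigma\subset\mathbb{R}^d$ be an open set with coordinates $\xi^a$, $M\subset\mathbb{R}^D$ open with coordinates $X^\mu$, $V$ a smooth volume metric on $M$, and $X:\Sigma\to M$ a smooth map with $\gamma_v>0$ on $\Sigma$. Let $F$ be a $C^2$ function on $(0,\infty)$. If $X$ satisfies the Euler–Lagrange equations of the action $S=\int_\Sigma d^d\xi\,F(\gamma_v)$, i.e. $$\frac{\partial F(\gamma_v)}{\partial X^\alpha}-\partial_a\frac{\partial F(\gamma_v)}{\partial(\partial_aX^\alpha)}=0\quad(\alpha=1,\dots,D),$$ then for every $b=1,\dots,d$, $$\left(\partial_b\gamma_v\right)\left(2\gamma_v\,F''(\gamma_v)+F'(\gamma_v)\right)=0\quad\text{on }\Sigma.$$
   Context: A volume metric (of degree $d$) on $M$ is a smooth field of components $V_{[\mu_1\cdots\mu_d][\nu_1\cdots\nu_d]}(X)$ that is totally antisymmetric within each of the two $d$-tuples of indices and symmetric under exchange of the two $d$-tuples. Given $X:\Sigma\to M$, define $\sigma^{\mu_1\cdots\mu_d}=\epsilon^{a_1\cdots a_d}\partial_{a_1}X^{\mu_1}\cdots\partial_{a_d}X^{\mu_d}$ (with $\epsilon$ the $d$-dimensional Levi-Civita symbol) and $\gamma_v=V_{[\mu_1\cdots\mu_d][\nu_1\cdots\nu_d]}(X)\,\sigma^{\mu_1\cdots\mu_d}\sigma^{\nu_1\cdots\nu_d}$. Special cases: for a Riemannian metric $g$, $V=\frac{1}{d!}g_{\mu_1\nu_1}\cdots g_{\mu_d\nu_d}$ gives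 $\gamma_v=\det(g_{\mu\nu}\partial_aX^\mu\partial_bX^\nu)$; for $d=2$ and an areal metric $G_{\mu\nu\rho\lambda}$, $V=\frac14G$ gives $\gamma_v=\frac14G_{\mu\nu\rho\lambda}\sigma^{\mu\nu}\sigma^{\rho\lambda}$. *)

theory Defs
  imports "HOL-Analysis.Analysis" "HOL-Combinatorics.Permutations"
begin

definition dirderiv :: "('a::real_normed_vector \<Rightarrow> real) \<Rightarrow> 'a \<Rightarrow> 'a \<Rightarrow> real" where
  "dirderiv f x v = deriv (\<lambda>t. f (x + t *\<^sub>R v)) 0"

definition partial :: "(real^'n \<Rightarrow> real) \<Rightarrow> real^'n \<Rightarrow> 'n \<Rightarrow> real" where
  "partial f x i = dirderiv f x (axis i 1)"

fun Ck_on :: "nat \<Rightarrow> (real^'n) set \<Rightarrow> (real^'n \<Rightarrow> real) \<Rightarrow> bool" where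
  "Ck_on 0 S f = continuous_on S f"
| "Ck_on (Suc k) S f = (f differentiable_on S \<and> (\<forall>i. Ck_on k S (\<lambda>x. partial f x i)))"

definition smooth_on :: "(real^'n) set \<Rightarrow> (real^'n \<Rightarrow> real) \<Rightarrow> bool" where
  "smooth_on S f = (\<forall>k. Ck_on k S f)"

definition levi_civita :: "('d::finite \<Rightarrow> 'd) \<Rightarrow> real" where
  "levi_civita a = (if a permutes (UNIV :: 'd set) then real_of_int (sign a) else 0)"

text \<open>Volume metric of degree d = CARD('d) on M: components V x m n, with m, n d-tuples of
  target indices; smooth, totally antisymmetric in each tuple, symmetric under exchange.\<close>
definition volume_metric :: "(real^'D) set \<Rightarrow> (real^'D \<Rightarrow> ('d::finite \<Rightarrow> 'D::finite) \<Rightarrow> ('d \<Rightarrow> 'D) \<Rightarrow> real) \<Rightarrow> bool" where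
  "volume_metric M V =
     ((\<forall>m n. smooth_on M (\<lambda>x. V x m n))
    \<and> (\<forall>x\<in>M. \<forall>m n p. p permutes (UNIV :: 'd set) \<longrightarrow>
          V x (m \<circ> p) n = real_of_int (sign p) * V x m n
        \<and> V x m (n \<circ> p) = real_of_int (sign p) * V x m n)
    \<and> (\<forall>x\<in>M. \<forall>m n. V x m n = V x n m))"

text \<open>sigma^{mu_1...mu_d} built from the matrix P, where P $ mu $ a stands for d_a X^mu.\<close>
definition sigma_pt :: "real^'d^'D \<Rightarrow> ('d::finite \<Rightarrow> 'D::finite) \<Rightarrow> real" where
  "sigma_pt P m = (\<Sum>a\<in>(UNIV :: ('d \<Rightarrow> 'd) set). levi_civita a * (\<Prod>i\<in>UNIV. P $ (m i) $ (a i)))"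

definition gamma_pt :: "(real^'D \<Rightarrow> ('d::finite \<Rightarrow> 'D::finite) \<Rightarrow> ('d \<Rightarrow> 'D) \<Rightarrow> real)
     \<Rightarrow> real^'D \<Rightarrow> real^'d^'D \<Rightarrow> real" where
  "gamma_pt V x P = (\<Sum>m\<in>UNIV. \<Sum>n\<in>UNIV. V x m n * sigma_pt P m * sigma_pt P n)"

definition jac :: "(real^'d \<Rightarrow> real^'D) \<Rightarrow> real^'d \<Rightarrow> real^'d^'D" where
  "jac X \<xi> = (\<chi> \<mu>. \<chi> a. partial (\<lambda>\<eta>. X \<eta> $ \<mu>) \<xi> a)"

definition gamma_v :: "(real^'D \<Rightarrow> ('d::finite \<Rightarrow> 'D::finite) \<Rightarrow> ('d \<Rightarrow> 'D) \<Rightarrow> real)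
     \<Rightarrow> (real^'d \<Rightarrow> real^'D) \<Rightarrow> real^'d \<Rightarrow> real" where
  "gamma_v V X \<xi> = gamma_pt V (X \<xi>) (jac X \<xi>)"

definition lagr :: "(real^'D \<Rightarrow> ('d::finite \<Rightarrow> 'D::finite) \<Rightarrow> ('d \<Rightarrow> 'D) \<Rightarrow> real)
     \<Rightarrow> (real \<Rightarrow> real) \<Rightarrow> real^'D \<Rightarrow> real^'d^'D \<Rightarrow> real" where
  "lagr V F x P = F (gamma_pt V x P)"

text \<open>Euler-Lagrange equations of S = int F(gamma_v):
  dL/dX^alpha - d_a (dL/d(d_a X^alpha)) = 0 on Sigma, for every alpha.\<close>
definition euler_lagrange :: "(real^'d) set \<Rightarrow> (real^'D \<Rightarrow> ('d::finite \<Rightarrow> 'D::finite) \<Rightarrow> ('d \<Rightarrow> 'D) \<Rightarrow> real)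
     \<Rightarrow> (real \<Rightarrow> real) \<Rightarrow> (real^'d \<Rightarrow> real^'D) \<Rightarrow> bool" where
  "euler_lagrange Sig V F X =
    (\<forall>\<xi>\<in>Sig. \<forall>\<alpha>.
       dirderiv (\<lambda>x. lagr V F x (jac X \<xi>)) (X \<xi>) (axis \<alpha> 1)
       - (\<Sum>a\<in>UNIV. partial (\<lambda>\<eta>. dirderiv (\<lambda>P. lagr V F (X \<eta>) P) (jac X \<eta>) (axis \<alpha> (axis a 1))) \<xi> a)
       = 0)"

end

theory Submission
  imports Defs
begin

lemma line_deriv:
  assumes "(f has_derivative f') (at (x + s0 *\<^sub>R v))"
  shows "((\<lambda>s. f (x + s *\<^sub>R v)) has_real_derivative f' v) (at s0)"
proof -
  have l: "linear f'" using assms has_derivative_linear by blast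
  have "((\<lambda>s. x + s *\<^sub>R v) has_derivative (\<lambda>s. s *\<^sub>R v)) (at s0)"
    by (auto intro!: derivative_eq_intros)
  from has_derivative_compose[OF this assms]
  have "((\<lambda>s. f (x + s *\<^sub>R v)) has_derivative (\<lambda>s. f' (s *\<^sub>R v))) (at s0)" .
  moreover have "(\<lambda>s. f' (s *\<^sub>R v)) = (*) (f' v)"
    using l by (auto simp: linear_scale)
  ultimately show ?thesis by (simp add: has_field_derivative_def)
qed

lemma line_deriv':
  assumes "f differentiable (at (x + s0 *\<^sub>R v))"
  shows "((\<lambda>s. f (x + s *\<^sub>R v)) has_real_derivative dirderiv f (x + s0 *\<^sub>R v) v) (at s0)"
proof -
  obtain f' where f': "(f has_derivative f') (at (x + s0 *\<^sub>R v))"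
    using assms differentiable_def by blast
  have d: "((\<lambda>s. f (x + s *\<^sub>R v)) has_real_derivative f' v) (at s0)"
    by (rule line_deriv[OF f'])
  have "((\<lambda>s. f ((x + s0 *\<^sub>R v) + s *\<^sub>R v)) has_real_derivative f' v) (at 0)"
    using line_deriv[of f f' "x + s0 *\<^sub>R v" 0 v] f' by simp
  then have "dirderiv f (x + s0 *\<^sub>R v) v = f' v"
    unfolding dirderiv_def by (rule DERIV_imp_deriv)
  with d show ?thesis by simp
qed

lemma dirderiv_eq:
  assumes "(f has_derivative f') (at x)"
  shows "dirderiv f x v = f' v"
proof -
  have "((\<lambda>s. f (x + s *\<^sub>R v)) has_real_derivative f' v) (at 0)"
    using line_deriv[of f f' x 0 v] assms by simp
  then show ?thesis unfolding dirderiv_def by (rule DERIV_imp_deriv)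
qed

lemma dirderiv_local:
  assumes "open S" "x \<in> S" "\<forall>y\<in>S. f y = g y"
  shows "dirderiv f x v = dirderiv g x v"
proof -
  have o: "open ((\<lambda>t::real. x + t *\<^sub>R v) -` S)"
    by (rule continuous_open_vimage[OF assms(1)]) (auto intro!: continuous_intros)
  have "eventually (\<lambda>t. f (x + t *\<^sub>R v) = g (x + t *\<^sub>R v)) (nhds 0)"
    unfolding eventually_nhds using o assms(2,3) by (intro exI[of _ "(\<lambda>t::real. x + t *\<^sub>R v) -` S"]) auto
  then show ?thesis unfolding dirderiv_def by (intro deriv_cong_ev) auto
qed

lemma smooth_diff: "smooth_on S f \<Longrightarrow> f differentiable_on S"
  unfolding smooth_on_def by (metis Ck_on.simps(2))

lemma smooth_partial: "smooth_on S f \<Longrightarrow> smooth_on S (\<lambda>x. partial f x i)"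
  unfolding smooth_on_def by (metis Ck_on.simps(2))

lemma smooth_cont: "smooth_on S f \<Longrightarrow> continuous_on S f"
  unfolding smooth_on_def by (metis Ck_on.simps(1))

lemma smooth_diff_at: "smooth_on S f \<Longrightarrow> open S \<Longrightarrow> x \<in> S \<Longrightarrow> f differentiable (at x)"
  using smooth_diff differentiable_on_eq_differentiable_at by blast

lemma mixed_mvt:
  fixes f :: "'a::real_normed_vector \<Rightarrow> real"
  assumes df: "\<forall>y\<in>S. f differentiable (at y)"
    and dfa: "\<forall>y\<in>S. (\<lambda>y. dirderiv f y u) differentiable (at y)"
    and h: "h > 0"
    and seg: "\<forall>s t. 0 \<le> s \<and> s \<le> h \<and> 0 \<le> t \<and> t \<le> h \<longrightarrow> p + s *\<^sub>R u + t *\<^sub>R v \<in> S"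
  shows "\<exists>s t. 0 < s \<and> s < h \<and> 0 < t \<and> t < h \<and>
     f (p + h *\<^sub>R u + h *\<^sub>R v) - f (p + h *\<^sub>R u) - f (p + h *\<^sub>R v) + f p
       = h * h * dirderiv (\<lambda>y. dirderiv f y u) (p + s *\<^sub>R u + t *\<^sub>R v) v"
proof -
  define fa where "fa = (\<lambda>y. dirderiv f y u)"
  define A where "A = (\<lambda>s. f ((p + h *\<^sub>R v) + s *\<^sub>R u) - f (p + s *\<^sub>R u))"
  have dA: "DERIV A s :> fa ((p + h *\<^sub>R v) + s *\<^sub>R u) - fa (p + s *\<^sub>R u)"
    if "0 \<le> s" "s \<le> h" for s
  proof -
    have m1: "(p + h *\<^sub>R v) + s *\<^sub>R u \<in> S" using seg[rule_format, of s h] that h by (simp add: add_ac)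
    have m2: "p + s *\<^sub>R u \<in> S" using seg[rule_format, of s 0] that h by simp
    show ?thesis unfolding A_def fa_def
      by (intro derivative_intros line_deriv') (use df m1 m2 in auto)
  qed
  obtain c1 where c1: "0 < c1" "c1 < h" "A h - A 0 = (h - 0) * (fa ((p + h *\<^sub>R v) + c1 *\<^sub>R u) - fa (p + c1 *\<^sub>R u))"
    using MVT2[of 0 h A "\<lambda>s. fa ((p + h *\<^sub>R v) + s *\<^sub>R u) - fa (p + s *\<^sub>R u)"] h dA by auto
  define B where "B = (\<lambda>t. fa ((p + c1 *\<^sub>R u) + t *\<^sub>R v))"
  have dB: "DERIV B t :> dirderiv fa ((p + c1 *\<^sub>R u) + t *\<^sub>R v) v" if "0 \<le> t" "t \<le> h" for t
  proof -
    have "(p + c1 *\<^sub>R u) + t *\<^sub>R v \<in> S" using seg that c1 by auto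
    then show ?thesis unfolding B_def by (intro line_deriv') (use dfa fa_def in auto)
  qed
  obtain c2 where c2: "0 < c2" "c2 < h" "B h - B 0 = (h - 0) * dirderiv fa ((p + c1 *\<^sub>R u) + c2 *\<^sub>R v) v"
    using MVT2[of 0 h B "\<lambda>t. dirderiv fa ((p + c1 *\<^sub>R u) + t *\<^sub>R v) v"] h dB by auto
  have "B h - B 0 = fa ((p + h *\<^sub>R v) + c1 *\<^sub>R u) - fa (p + c1 *\<^sub>R u)"
    unfolding B_def by (simp add: add_ac)
  then have "A h - A 0 = h * h * dirderiv fa (p + c1 *\<^sub>R u + c2 *\<^sub>R v) v"
    using c1 c2 by simp
  moreover have "A h - A 0 = f (p + h *\<^sub>R u + h *\<^sub>R v) - f (p + h *\<^sub>R u) - f (p + h *\<^sub>R v) + f p"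
    unfolding A_def by (simp add: add_ac)
  ultimately show ?thesis using c1 c2 unfolding fa_def by metis
qed


lemma norm_axis1: "norm (axis i (1::real)) = 1"
  by simp

lemma clairaut:
  fixes f :: "real^'n \<Rightarrow> real"
  assumes S: "open S" and sm: "smooth_on S f" and p: "p \<in> S"
  shows "partial (\<lambda>x. partial f x a) p b = partial (\<lambda>x. partial f x b) p a"
proof -
  define u :: "real^'n" where "u = axis a 1"
  define v :: "real^'n" where "v = axis b 1"
  have nu: "norm u = 1" "norm v = 1" unfolding u_def v_def by (simp_all add: norm_axis1)
  define fab where "fab = (\<lambda>y. dirderiv (\<lambda>y. dirderiv f y u) y v)"
  define fba where "fba = (\<lambda>y. dirderiv (\<lambda>y. dirderiv f y v) y u)"
  have pa: "(\<lambda>x. partial f x a) = (\<lambda>y. dirderiv f y u)" "(\<lambda>x. partial f x b) = (\<lambda>y. dirderiv f y v)"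
    unfolding partial_def u_def v_def by auto
  have smab: "smooth_on S fab" "smooth_on S fba"
    unfolding fab_def fba_def using smooth_partial[OF smooth_partial[OF sm]]
    unfolding partial_def u_def v_def by auto
  have df: "\<forall>y\<in>S. f differentiable (at y)" using smooth_diff_at[OF sm S] by blast
  have dfu: "\<forall>y\<in>S. (\<lambda>y. dirderiv f y u) differentiable (at y)"
    using smooth_diff_at[OF smooth_partial[OF sm, of a] S] unfolding partial_def u_def by blast
  have dfv: "\<forall>y\<in>S. (\<lambda>y. dirderiv f y v) differentiable (at y)"
    using smooth_diff_at[OF smooth_partial[OF sm, of b] S] unfolding partial_def v_def by blast
  have cab: "continuous (at p) fab" "continuous (at p) fba"
    using smooth_cont[OF smab(1)] smooth_cont[OF smab(2)] S p continuous_on_eq_continuous_at by blast+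
  obtain r where r: "r > 0" "ball p r \<subseteq> S" using S p open_contains_ball by blast
  have seg: "\<forall>s t. 0 \<le> s \<and> s \<le> h \<and> 0 \<le> t \<and> t \<le> h \<longrightarrow> p + s *\<^sub>R w1 + t *\<^sub>R w2 \<in> S"
    if "h > 0" "2 * h < r" "norm w1 = 1" "norm w2 = 1" for h w1 w2
  proof (intro allI impI)
    fix s t assume st: "0 \<le> s \<and> s \<le> h \<and> 0 \<le> t \<and> t \<le> h"
    have "norm (s *\<^sub>R w1 + t *\<^sub>R w2) \<le> norm (s *\<^sub>R w1) + norm (t *\<^sub>R w2)" by (rule norm_triangle_ineq)
    also have "\<dots> = s + t" using st that by simp
    moreover have "dist p (p + s *\<^sub>R w1 + t *\<^sub>R w2) = norm (s *\<^sub>R w1 + t *\<^sub>R w2)"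
      unfolding dist_norm by (subst norm_minus_commute) simp
    ultimately have "dist p (p + s *\<^sub>R w1 + t *\<^sub>R w2) < r" using st that by linarith
    then show "p + s *\<^sub>R w1 + t *\<^sub>R w2 \<in> S" using r by auto
  qed
  have close: "dist (p + s *\<^sub>R w1 + t *\<^sub>R w2) p \<le> 2 * h"
    if "0 \<le> s" "s \<le> h" "0 \<le> t" "t \<le> h" "norm w1 = 1" "norm w2 = 1" for h s t w1 w2
  proof -
    have "norm (s *\<^sub>R w1 + t *\<^sub>R w2) \<le> norm (s *\<^sub>R w1) + norm (t *\<^sub>R w2)" by (rule norm_triangle_ineq)
    also have "\<dots> = s + t" using that by simp
    finally show ?thesis using that by (simp add: dist_norm add.assoc)
  qed
  show ?thesis
  proof (rule ccontr)
    assume ne: "\<not> ?thesis"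
    then have ne': "fab p \<noteq> fba p" using pa unfolding fab_def fba_def partial_def u_def v_def by simp
    define e where "e = \<bar>fab p - fba p\<bar> / 2"
    have e: "e > 0" using ne' unfolding e_def by simp
    obtain d1 where d1: "d1 > 0" "\<forall>x'. dist x' p < d1 \<longrightarrow> dist (fab x') (fab p) < e"
      using cab(1) e unfolding continuous_at_eps_delta by blast
    obtain d2 where d2: "d2 > 0" "\<forall>x'. dist x' p < d2 \<longrightarrow> dist (fba x') (fba p) < e"
      using cab(2) e unfolding continuous_at_eps_delta by blast
    define h where "h = min r (min d1 d2) / 4"
    have h: "h > 0" "2 * h < r" "2 * h < d1" "2 * h < d2" using r d1 d2 unfolding h_def by auto
    obtain s1 t1 where st1: "0 < s1" "s1 < h" "0 < t1" "t1 < h"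
      "f (p + h *\<^sub>R u + h *\<^sub>R v) - f (p + h *\<^sub>R u) - f (p + h *\<^sub>R v) + f p = h * h * fab (p + s1 *\<^sub>R u + t1 *\<^sub>R v)"
      using mixed_mvt[OF df dfu h(1) seg[OF h(1) h(2) nu]] unfolding fab_def by blast
    obtain s2 t2 where st2: "0 < s2" "s2 < h" "0 < t2" "t2 < h"
      "f (p + h *\<^sub>R v + h *\<^sub>R u) - f (p + h *\<^sub>R v) - f (p + h *\<^sub>R u) + f p = h * h * fba (p + s2 *\<^sub>R v + t2 *\<^sub>R u)"
      using mixed_mvt[OF df dfv h(1) seg[OF h(1) h(2) nu(2) nu(1)]] unfolding fba_def by blast
    have "h * h * fab (p + s1 *\<^sub>R u + t1 *\<^sub>R v) = h * h * fba (p + s2 *\<^sub>R v + t2 *\<^sub>R u)"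
    proof -
      have "f (p + h *\<^sub>R u + h *\<^sub>R v) - f (p + h *\<^sub>R u) - f (p + h *\<^sub>R v) + f p
          = f (p + h *\<^sub>R v + h *\<^sub>R u) - f (p + h *\<^sub>R v) - f (p + h *\<^sub>R u) + f p"
        by (simp add: add_ac)
      then show ?thesis using st1(5) st2(5) by linarith
    qed
    then have eq: "fab (p + s1 *\<^sub>R u + t1 *\<^sub>R v) = fba (p + s2 *\<^sub>R v + t2 *\<^sub>R u)"
      using h(1) by simp
    have "dist (p + s1 *\<^sub>R u + t1 *\<^sub>R v) p < d1"
      using close[of s1 h t1 u v] st1 nu h by linarith
    then have 1: "dist (fab (p + s1 *\<^sub>R u + t1 *\<^sub>R v)) (fab p) < e" using d1 by blast
    have "dist (p + s2 *\<^sub>R v + t2 *\<^sub>R u) p < d2"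
      using close[of s2 h t2 v u] st2 nu h by linarith
    then have 2: "dist (fba (p + s2 *\<^sub>R v + t2 *\<^sub>R u)) (fba p) < e" using d2 by blast
    from 1 2 eq show False unfolding e_def dist_real_def by (simp add: abs_if split: if_splits)
  qed
qed


definition Emat :: "'D \<Rightarrow> 'd \<Rightarrow> real^'d^'D" where
  "Emat \<alpha> a = axis \<alpha> (axis a 1)"

definition dsig :: "real^'d^'D \<Rightarrow> ('d::finite \<Rightarrow> 'D::finite) \<Rightarrow> real^'d^'D \<Rightarrow> real" where
  "dsig P m K = (\<Sum>p\<in>UNIV. levi_civita p * (\<Sum>i\<in>UNIV. K $ m i $ p i * (\<Prod>j\<in>UNIV - {i}. P $ m j $ p j)))"

definition GP :: "(real^'D \<Rightarrow> ('d::finite \<Rightarrow> 'D::finite) \<Rightarrow> ('d \<Rightarrow> 'D) \<Rightarrow> real)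
     \<Rightarrow> real^'D \<Rightarrow> real^'d^'D \<Rightarrow> real^'d^'D \<Rightarrow> real" where
  "GP V x P K = (\<Sum>m\<in>UNIV. \<Sum>n\<in>UNIV. V x m n * (dsig P m K * sigma_pt P n + sigma_pt P m * dsig P n K))"

lemma nth2_deriv: "((\<lambda>P::'a::real_normed_vector^'b^'c. P $ i $ j) has_derivative (\<lambda>K. K $ i $ j)) F"
  by (rule bounded_linear_imp_has_derivative)
     (rule bounded_linear_compose[OF bounded_linear_vec_nth bounded_linear_vec_nth])

lemma sig_deriv: "((\<lambda>P. sigma_pt P m) has_derivative dsig P m) (at P within T)"
  unfolding sigma_pt_def
  apply (rule has_derivative_eq_rhs)
   apply (rule has_derivative_sum)
   apply (rule has_derivative_mult_right)
   apply (rule has_derivative_prod)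
   apply (rule nth2_deriv)
  apply (simp add: dsig_def fun_eq_iff)
  done

lemma gam_derivP: "((\<lambda>P. gamma_pt V x P) has_derivative GP V x P) (at P within T)"
  unfolding gamma_pt_def
  apply (rule has_derivative_eq_rhs)
   apply (rule has_derivative_sum)+
   apply (rule has_derivative_mult)
    apply (rule has_derivative_mult_right)
    apply (rule sig_deriv)
   apply (rule sig_deriv)
  apply (simp add: GP_def fun_eq_iff algebra_simps)
  done

lemma GP_linear: "linear (GP V x P)"
  using gam_derivP[of V x P UNIV] has_derivative_linear by blast

lemma levi_civita_sum:
  "(\<Sum>a\<in>(UNIV :: ('d::finite \<Rightarrow> 'd) set). levi_civita a * g a)
     = (\<Sum>a\<in>{p. p permutes (UNIV :: 'd set)}. real_of_int (sign a) * g a)"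
proof -
  have "(\<Sum>a\<in>{p. p permutes (UNIV :: 'd set)}. real_of_int (sign a) * g a)
      = (\<Sum>a\<in>(UNIV :: ('d \<Rightarrow> 'd) set). if a permutes UNIV then real_of_int (sign a) * g a else 0)"
    by (subst sum.inter_filter[symmetric]) auto
  then show ?thesis unfolding levi_civita_def by (auto intro!: sum.cong)
qed

lemma sigma_det: "sigma_pt P m = det (\<chi> i j. P $ m i $ j)"
  unfolding sigma_pt_def det_def by (subst levi_civita_sum) simp

lemma sigma_mult: "sigma_pt (P ** (A :: real^'d^'d)) m = det A * sigma_pt P (m :: 'd::finite \<Rightarrow> 'D::finite)"
proof -
  have "(\<chi> i j. (P ** A) $ m i $ j) = (\<chi> i j. P $ m i $ j) ** A"
    by (simp add: vec_eq_iff matrix_matrix_mult_def)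
  then show ?thesis by (simp add: sigma_det det_mul)
qed

lemma gamma_mult: "gamma_pt V x (P ** (A :: real^'d^'d)) = (det A)^2 * gamma_pt V x (P :: real^'d^'D)"
  unfolding gamma_pt_def by (simp add: sigma_mult sum_distrib_left power2_eq_square algebra_simps)

lemma mif: "x * (if Q then y else 0) = (if Q then x * y else (0::real))" by simp
lemma if_nth: "(if Q then u else v) $ j = (if Q then u $ j else v $ j)" by simp
lemma axis_nth2: "axis i x $ j = (if j = i then x else 0)" by (simp add: axis_def)
lemma matrix_scaleR_right: "(A::real^'n::finite^'m::finite) ** (k *\<^sub>R B) = k *\<^sub>R (A ** (B::real^'p::finite^'n))"
  by (simp add: vec_eq_iff matrix_matrix_mult_def sum_distrib_left mult_ac)

lemma det_elem: "det (mat 1 + s *\<^sub>R (axis b (axis a 1) :: real^'d^'d)) = 1 + s * (if a = b then 1 else 0)"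
proof (cases "a = b")
  case True
  let ?M = "mat 1 + s *\<^sub>R (axis b (axis a 1) :: real^'d^'d)"
  have d: "\<And>i j. i \<noteq> j \<Longrightarrow> ?M $ i $ j = 0"
    using True by (auto simp add: mat_def axis_nth2 if_nth cong: if_cong)
  have "det ?M = (\<Prod>i\<in>UNIV. ?M $ i $ i)" by (rule det_diagonal[OF d])
  also have "\<dots> = (\<Prod>i\<in>UNIV. if i = a then 1 + s else 1)"
    using True by (intro prod.cong) (simp_all add: mat_def axis_nth2 if_nth cong: if_cong)
  also have "\<dots> = 1 + s" by (simp add: prod.delta)
  finally show ?thesis using True by simp
next
  case False
  have "(mat 1 + s *\<^sub>R (axis b (axis a 1) :: real^'d^'d))
      = (\<chi> k. if k = b then row b (mat 1) + s *s row a (mat 1) else row k (mat 1))"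
    by (auto simp: vec_eq_iff mat_def axis_def row_def)
  then show ?thesis using det_row_operation[where i=b and j=a and c=s and A="mat 1 :: real^'d^'d"] False by simp
qed

lemma euler_matrix: "(\<Sum>\<alpha>\<in>UNIV. P $ \<alpha> $ b *\<^sub>R Emat \<alpha> a) = P ** (axis b (axis a 1) :: real^'d^'d)"
  by (simp add: Emat_def vec_eq_iff matrix_matrix_mult_def axis_nth2 if_nth mif cong: if_cong)

lemma euler_identity:
  "(\<Sum>\<alpha>\<in>UNIV. GP V x P (Emat \<alpha> a) * P $ \<alpha> $ b)
     = (if a = b then 2 * gamma_pt V x (P :: real^'d::finite^'D::finite) else 0)"
proof -
  define E :: "real^'d^'d" where "E = axis b (axis a 1)"
  have l: "linear (GP V x P)" by (rule GP_linear)
  have "(\<Sum>\<alpha>\<in>UNIV. GP V x P (Emat \<alpha> a) * P $ \<alpha> $ b) = GP V x P (\<Sum>\<alpha>\<in>UNIV. P $ \<alpha> $ b *\<^sub>R Emat \<alpha> a)"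
    using l by (simp add: linear_sum linear_scale mult.commute)
  also have "\<dots> = GP V x P (P ** E)" unfolding E_def euler_matrix ..
  also have "\<dots> = dirderiv (gamma_pt V x) P (P ** E)"
    using dirderiv_eq[OF gam_derivP[of V x P UNIV]] by simp
  also have "\<dots> = deriv (\<lambda>s. (1 + s * (if a = b then 1 else 0))^2 * gamma_pt V x P) 0"
  proof -
    have "gamma_pt V x (P + s *\<^sub>R (P ** E)) = (1 + s * (if a = b then 1 else 0))^2 * gamma_pt V x P" for s
    proof -
      have e: "P + s *\<^sub>R (P ** E) = P ** (mat 1 + s *\<^sub>R E)"
        by (simp add: matrix_add_ldistrib matrix_scaleR_right)
      show ?thesis unfolding e gamma_mult unfolding E_def det_elem by (rule refl)
    qed
    then show ?thesis unfolding dirderiv_def by simp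
  qed
  also have "\<dots> = (if a = b then 2 * gamma_pt V x P else 0)"
    by (rule DERIV_imp_deriv) (auto intro!: derivative_eq_intros)
  finally show ?thesis .
qed


lemma vec_has_derivative:
  fixes f :: "'a::euclidean_space \<Rightarrow> 'b::real_normed_vector^'n::finite"
  assumes d: "\<And>i. ((\<lambda>x. f x $ i) has_derivative f' i) (at x)"
  shows "(f has_derivative (\<lambda>h. \<chi> i. f' i h)) (at x)"
proof -
  have l: "\<And>i. linear (f' i)" using d has_derivative_linear by blast
  have lin: "linear (\<lambda>h. \<chi> i. f' i h)"
    by (rule linearI) (simp_all add: vec_eq_iff linear_add[OF l] linear_scale[OF l])
  have t: "\<And>i. ((\<lambda>y. ((f y $ i - f x $ i) - f' i (y - x)) /\<^sub>R norm (y - x)) \<longlongrightarrow> 0) (at x)"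
    using d unfolding has_derivative_at_within by blast
  show ?thesis unfolding has_derivative_at_within
  proof
    show "bounded_linear (\<lambda>h. \<chi> i. f' i h)" using lin linear_conv_bounded_linear by blast
    show "((\<lambda>y. (f y - f x - (\<chi> i. f' i (y - x))) /\<^sub>R norm (y - x)) \<longlongrightarrow> 0) (at x)"
      by (rule vec_tendstoI) (use t in simp)
  qed
qed

lemma snd_diff: "snd differentiable F"
  by (rule bounded_linear_imp_differentiable) (rule bounded_linear_snd)
lemma fst_diff: "fst differentiable F"
  by (rule bounded_linear_imp_differentiable) (rule bounded_linear_fst)

lemma prod_differentiable:
  fixes f :: "'i \<Rightarrow> 'a::real_normed_vector \<Rightarrow> real"
  assumes "\<And>i. i \<in> I \<Longrightarrow> f i differentiable (at x within S)"
  shows "(\<lambda>x. \<Prod>i\<in>I. f i x) differentiable (at x within S)"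
proof -
  obtain f' where "\<And>i. i \<in> I \<Longrightarrow> (f i has_derivative f' i) (at x within S)"
    using assms unfolding differentiable_def by metis
  then show ?thesis unfolding differentiable_def by (blast intro: has_derivative_prod)
qed

lemma sig_snd_diff: "(\<lambda>z. sigma_pt (snd z) m) differentiable (at z)"
proof -
  have "(\<lambda>P. sigma_pt P m) differentiable (at (snd z))"
    using sig_deriv[of m "snd z" UNIV] differentiable_def by blast
  then show ?thesis using differentiable_compose[of "\<lambda>P. sigma_pt P m" snd z UNIV] snd_diff by blast
qed

lemma nth2_snd_diff: "(\<lambda>z. (snd z) $ i $ j) differentiable (at z)"
proof -
  have "(\<lambda>P. P $ i $ j) differentiable (at (snd z))"
    using nth2_deriv differentiable_def by blast
  then show ?thesis using differentiable_compose[of "\<lambda>P. P $ i $ j" snd z UNIV] snd_diff by blast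
qed

lemma dsig_snd_diff: "(\<lambda>z. dsig (snd z) m K) differentiable (at z)"
  unfolding dsig_def
  by (intro differentiable_sum ballI differentiable_mult differentiable_const prod_differentiable
      nth2_snd_diff) auto

lemma V_fst_diff:
  assumes "(\<lambda>x. V x m n) differentiable (at (fst z))"
  shows "(\<lambda>z. V (fst z) m n) differentiable (at z)"
  using differentiable_compose[of "\<lambda>x. V x m n" fst z UNIV] assms fst_diff by blast

lemma gamma_joint_diff:
  assumes "\<forall>m n. (\<lambda>x. V x m n) differentiable (at (fst z))"
  shows "(\<lambda>z. gamma_pt V (fst z) (snd z)) differentiable (at z)"
  unfolding gamma_pt_def
  by (intro differentiable_sum ballI differentiable_mult V_fst_diff sig_snd_diff)
     (use assms in auto)

lemma GP_joint_diff:
  assumes "\<forall>m n. (\<lambda>x. V x m n) differentiable (at (fst z))"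
  shows "(\<lambda>z. GP V (fst z) (snd z) K) differentiable (at z)"
  unfolding GP_def
  by (intro differentiable_sum ballI differentiable_mult differentiable_add V_fst_diff sig_snd_diff
      dsig_snd_diff)
     (use assms in auto)

lemma lin_expand_vec:
  assumes "linear f"
  shows "f (h::real^'n::finite) = (\<Sum>i\<in>UNIV. h $ i * f (axis i 1))"
proof -
  have "h = (\<Sum>i\<in>UNIV. h $ i *\<^sub>R axis i 1)"
    using basis_expansion[of h] by (simp add: scalar_mult_eq_scaleR)
  then have "f h = f (\<Sum>i\<in>UNIV. h $ i *\<^sub>R axis i 1)" by simp
  also have "\<dots> = (\<Sum>i\<in>UNIV. h $ i * f (axis i 1))"
    using assms by (simp add: linear_sum linear_scale)
  finally show ?thesis .
qed

lemma sum_if_out: "(\<Sum>x\<in>A. if Q then f x else 0) = (if Q then sum f A else (0::real))"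
  by (cases Q) auto

lemma lin_expand_mat:
  assumes "linear f"
  shows "f (K::real^'d::finite^'D::finite) = (\<Sum>\<alpha>\<in>UNIV. \<Sum>a\<in>UNIV. K $ \<alpha> $ a * f (Emat \<alpha> a))"
proof -
  have "K = (\<Sum>\<alpha>\<in>UNIV. \<Sum>a\<in>UNIV. K $ \<alpha> $ a *\<^sub>R Emat \<alpha> a)"
    by (simp add: vec_eq_iff Emat_def axis_nth2 if_nth mif sum_if_out sum.delta sum.delta' cong: if_cong)
  then have "f K = f (\<Sum>\<alpha>\<in>UNIV. \<Sum>a\<in>UNIV. K $ \<alpha> $ a *\<^sub>R Emat \<alpha> a)" by simp
  also have "\<dots> = (\<Sum>\<alpha>\<in>UNIV. \<Sum>a\<in>UNIV. K $ \<alpha> $ a * f (Emat \<alpha> a))"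
    using assms by (simp add: linear_sum linear_scale)
  finally show ?thesis .
qed

lemma lin_pair:
  assumes "linear f"
  shows "f (h, K) = f (h, 0) + f (0, K)"
proof -
  have "(h, K) = (h, 0) + (0, K)" by simp
  then show ?thesis using linear_add[OF assms] by metis
qed

lemma lin_pair_vec:
  assumes "linear f"
  shows "f ((h::real^'n::finite), 0) = (\<Sum>i\<in>UNIV. h $ i * f (axis i 1, 0))"
proof -
  have "linear (\<lambda>h. f (h, 0))"
  proof (rule linearI)
    fix x y :: "real^'n" show "f (x + y, 0) = f (x, 0) + f (y, 0)"
      using linear_add[OF assms, of "(x,0)" "(y,0)"] by simp
  next
    fix c and x :: "real^'n" show "f (c *\<^sub>R x, 0) = c *\<^sub>R f (x, 0)"
      using linear_scale[OF assms, of c "(x,0)"] by simp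
  qed
  then show ?thesis by (rule lin_expand_vec)
qed


theorem mainTheorem3:
  fixes Sig :: "(real^'d) set" and M :: "(real^'D) set"
    and V :: "real^'D \<Rightarrow> ('d::finite \<Rightarrow> 'D::finite) \<Rightarrow> ('d \<Rightarrow> 'D) \<Rightarrow> real"
    and X :: "real^'d \<Rightarrow> real^'D"
    and F F' F'' :: "real \<Rightarrow> real"
  assumes "open Sig" and "open M"
    and "volume_metric M V"
    and "X ` Sig \<subseteq> M"
    and "\<forall>\<mu>. smooth_on Sig (\<lambda>\<xi>. X \<xi> $ \<mu>)"
    and "\<forall>\<xi>\<in>Sig. gamma_v V X \<xi> > 0"
    and "\<forall>t>0. (F has_real_derivative F' t) (at t)"
    and "\<forall>t>0. (F' has_real_derivative F'' t) (at t)"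
    and "continuous_on {0<..} F''"
    and "euler_lagrange Sig V F X"
  shows "\<forall>\<xi>\<in>Sig. \<forall>b. partial (gamma_v V X) \<xi> b *
           (2 * gamma_v V X \<xi> * F'' (gamma_v V X \<xi>) + F' (gamma_v V X \<xi>)) = 0"
proof (intro ballI allI)
  fix \<xi> b assume \<xi>: "\<xi> \<in> Sig"
  define Xc where "Xc = (\<lambda>\<mu> \<eta>. X \<eta> $ \<mu>)"
  define J where "J = jac X"
  have J_nth: "\<And>\<eta> \<mu> a. J \<eta> $ \<mu> $ a = partial (Xc \<mu>) \<eta> a"
    unfolding J_def jac_def Xc_def by simp
  have smX: "\<And>\<mu>. smooth_on Sig (Xc \<mu>)" using assms(5) unfolding Xc_def by simp
  have Jfun: "\<And>\<mu> a. (\<lambda>\<eta>. J \<eta> $ \<mu> $ a) = (\<lambda>\<eta>. partial (Xc \<mu>) \<eta> a)"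
    using J_nth by simp
  have smJ: "\<And>\<mu> a. smooth_on Sig (\<lambda>\<eta>. J \<eta> $ \<mu> $ a)"
    unfolding Jfun by (rule smooth_partial[OF smX])
  define g where "g = gamma_v V X"
  have g_eq: "\<And>\<eta>. g \<eta> = gamma_pt V (X \<eta>) (J \<eta>)" unfolding g_def gamma_v_def J_def ..
  define Gj where "Gj = (\<lambda>z::(real, 'D) vec \<times> ((real, 'd) vec, 'D) vec. gamma_pt V (fst z) (snd z))"
  define Phi where "Phi = (\<lambda>\<eta>. (X \<eta>, J \<eta>))"
  have g_comp: "g = (\<lambda>\<eta>. Gj (Phi \<eta>))" by (auto simp: g_eq Gj_def Phi_def)
  define w where "w = (\<lambda>\<alpha> a \<eta>. GP V (X \<eta>) (J \<eta>) (Emat \<alpha> a))"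
  define GPj where "GPj = (\<lambda>\<alpha> a (z::(real, 'D) vec \<times> ((real, 'd) vec, 'D) vec). GP V (fst z) (snd z) (Emat \<alpha> a))"
  have w_comp: "\<And>\<alpha> a. w \<alpha> a = (\<lambda>\<eta>. GPj \<alpha> a (Phi \<eta>))" by (auto simp: w_def GPj_def Phi_def)
  have Vd: "\<And>x m n. x \<in> M \<Longrightarrow> (\<lambda>x. V x m n) differentiable (at x)"
    using assms(3) assms(2) unfolding volume_metric_def by (metis smooth_diff_at)
  have XM: "X \<xi> \<in> M" using assms(4) \<xi> by auto
  have gpos: "g \<xi> > 0" using assms(6) \<xi> g_def by auto

  have "\<forall>\<mu>. \<exists>D. (Xc \<mu> has_derivative D) (at \<xi>)"
    using smooth_diff_at[OF smX assms(1) \<xi>] differentiable_def by blast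
  then obtain DX where DX: "\<And>\<mu>. (Xc \<mu> has_derivative DX \<mu>) (at \<xi>)" by metis
  have "\<forall>\<mu> a. \<exists>D. ((\<lambda>\<eta>. J \<eta> $ \<mu> $ a) has_derivative D) (at \<xi>)"
    using smooth_diff_at[OF smJ assms(1) \<xi>] differentiable_def by blast
  then obtain DJ where DJ: "\<And>\<mu> a. ((\<lambda>\<eta>. J \<eta> $ \<mu> $ a) has_derivative DJ \<mu> a) (at \<xi>)" by metis
  have dX: "(X has_derivative (\<lambda>h. \<chi> \<mu>. DX \<mu> h)) (at \<xi>)"
    using vec_has_derivative[of X DX \<xi>] DX unfolding Xc_def by simp
  have dJ1: "\<And>\<mu>. ((\<lambda>\<eta>. J \<eta> $ \<mu>) has_derivative (\<lambda>h. \<chi> a. DJ \<mu> a h)) (at \<xi>)"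
    by (rule vec_has_derivative) (rule DJ)
  have dJ: "(J has_derivative (\<lambda>h. \<chi> \<mu>. \<chi> a. DJ \<mu> a h)) (at \<xi>)"
    by (rule vec_has_derivative) (rule dJ1)
  define Phi' where "Phi' = (\<lambda>h. ((\<chi> \<mu>. DX \<mu> h), (\<chi> \<mu>. \<chi> a. DJ \<mu> a h)))"
  have dPhi: "(Phi has_derivative Phi') (at \<xi>)"
    unfolding Phi_def Phi'_def by (rule has_derivative_Pair[OF dX dJ])
  have Phi_diff: "Phi differentiable (at \<xi>)" using dPhi differentiable_def by blast
  have Vd': "\<forall>m n. (\<lambda>x. V x m n) differentiable (at (fst (Phi \<xi>)))"
    using Vd XM by (simp add: Phi_def)
  have "Gj differentiable (at (Phi \<xi>))"
    unfolding Gj_def by (rule gamma_joint_diff[OF Vd'])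
  then obtain DG where DG: "(Gj has_derivative DG) (at (Phi \<xi>))" using differentiable_def by blast
  have linDG: "linear DG" using DG has_derivative_linear by blast
  have dg: "(g has_derivative (\<lambda>h. DG (Phi' h))) (at \<xi>)"
    unfolding g_comp by (rule has_derivative_compose[OF dPhi DG])

  have DXe: "\<And>\<mu> c. DX \<mu> (axis c 1) = J \<xi> $ \<mu> $ c"
    by (simp add: J_nth partial_def dirderiv_eq[OF DX])
  define H where "H = (\<lambda>\<mu> a c. partial (\<lambda>\<eta>. J \<eta> $ \<mu> $ a) \<xi> c)"
  have DJe: "\<And>\<mu> a c. DJ \<mu> a (axis c 1) = H \<mu> a c"
    by (simp add: H_def partial_def dirderiv_eq[OF DJ])
  have Hsym: "\<And>\<mu> a c. H \<mu> a c = H \<mu> c a"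
    unfolding H_def Jfun by (rule clairaut[OF assms(1) smX \<xi>])
  have pg: "\<And>c. partial g \<xi> c = DG (Phi' (axis c 1))"
    by (simp add: partial_def dirderiv_eq[OF dg])
  have Phi'e: "\<And>c. Phi' (axis c 1) = ((\<chi> \<mu>. J \<xi> $ \<mu> $ c), (\<chi> \<mu>. \<chi> a. H \<mu> a c))"
    by (simp add: Phi'_def DXe DJe)

  have dGP: "((\<lambda>P. Gj (X \<xi>, P)) has_derivative (\<lambda>K. DG (0, K))) (at (J \<xi>))"
  proof -
    have "((\<lambda>P. (X \<xi>, P)) has_derivative (\<lambda>K. (0, K))) (at (J \<xi>))"
      by (auto intro!: derivative_eq_intros)
    moreover have "(Gj has_derivative DG) (at (X \<xi>, J \<xi>))" using DG by (simp add: Phi_def)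
    ultimately show ?thesis using has_derivative_compose by fastforce
  qed
  have "(\<lambda>K. DG (0, K)) = GP V (X \<xi>) (J \<xi>)"
  proof (rule has_derivative_unique[OF dGP])
    show "((\<lambda>P. Gj (X \<xi>, P)) has_derivative GP V (X \<xi>) (J \<xi>)) (at (J \<xi>))"
      unfolding Gj_def using gam_derivP[of V "X \<xi>" "J \<xi>" UNIV] by simp
  qed
  then have DG0K: "\<And>K. DG (0, K) = GP V (X \<xi>) (J \<xi>) K" by metis

  have D1: "partial g \<xi> b = (\<Sum>\<alpha>\<in>UNIV. J \<xi> $ \<alpha> $ b * DG (axis \<alpha> 1, 0))
              + (\<Sum>\<alpha>\<in>UNIV. \<Sum>a\<in>UNIV. H \<alpha> a b * w \<alpha> a \<xi>)"
  proof -
    define hb where "hb = (\<chi> \<mu>. J \<xi> $ \<mu> $ b)"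
    define Kb where "Kb = (\<chi> \<mu>. \<chi> a. H \<mu> a b)"
    have e1: "partial g \<xi> b = DG (hb, 0) + DG (0, Kb)"
      unfolding pg Phi'e hb_def[symmetric] Kb_def[symmetric] by (rule lin_pair[OF linDG])
    have e2: "DG (hb, 0) = (\<Sum>\<alpha>\<in>UNIV. hb $ \<alpha> * DG (axis \<alpha> 1, 0))"
      by (rule lin_pair_vec[OF linDG])
    have e3: "DG (0, Kb) = (\<Sum>\<alpha>\<in>UNIV. \<Sum>a\<in>UNIV. Kb $ \<alpha> $ a * GP V (X \<xi>) (J \<xi>) (Emat \<alpha> a))"
      unfolding DG0K by (rule lin_expand_mat[OF GP_linear])
    have "partial g \<xi> b = (\<Sum>\<alpha>\<in>UNIV. hb $ \<alpha> * DG (axis \<alpha> 1, 0))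
        + (\<Sum>\<alpha>\<in>UNIV. \<Sum>a\<in>UNIV. Kb $ \<alpha> $ a * GP V (X \<xi>) (J \<xi>) (Emat \<alpha> a))"
      by (simp only: e1 e2 e3)
    then show ?thesis by (simp add: hb_def Kb_def w_def)
  qed

  have D4: "\<And>\<alpha>. dirderiv (\<lambda>x. lagr V F x (J \<xi>)) (X \<xi>) (axis \<alpha> 1) = F' (g \<xi>) * DG (axis \<alpha> 1, 0)"
  proof -
    fix \<alpha>
    have "((\<lambda>x. (x, J \<xi>)) has_derivative (\<lambda>h. (h, 0))) (at (X \<xi>))"
      by (auto intro!: derivative_eq_intros)
    moreover have "(Gj has_derivative DG) (at (X \<xi>, J \<xi>))" using DG by (simp add: Phi_def)
    ultimately have d1: "((\<lambda>x. Gj (x, J \<xi>)) has_derivative (\<lambda>h. DG (h, 0))) (at (X \<xi>))"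
      using has_derivative_compose by fastforce
    have "DERIV F (Gj (X \<xi>, J \<xi>)) :> F' (g \<xi>)"
      using assms(7) gpos by (simp add: Gj_def g_eq)
    from DERIV_compose_FDERIV[OF this d1]
    have "((\<lambda>x. lagr V F x (J \<xi>)) has_derivative (\<lambda>h. DG (h, 0) * F' (g \<xi>))) (at (X \<xi>))"
      by (simp add: lagr_def Gj_def)
    from dirderiv_eq[OF this] show "dirderiv (\<lambda>x. lagr V F x (J \<xi>)) (X \<xi>) (axis \<alpha> 1) = F' (g \<xi>) * DG (axis \<alpha> 1, 0)"
      by simp
  qed

  have Du: "\<And>\<eta> \<alpha> a. \<eta> \<in> Sig \<Longrightarrow> dirderiv (\<lambda>P. lagr V F (X \<eta>) P) (J \<eta>) (Emat \<alpha> a) = F' (g \<eta>) * w \<alpha> a \<eta>"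
  proof -
    fix \<eta> \<alpha> a assume \<eta>: "\<eta> \<in> Sig"
    have "g \<eta> > 0" using assms(6) \<eta> g_def by auto
    then have "DERIV F (gamma_pt V (X \<eta>) (J \<eta>)) :> F' (g \<eta>)"
      using assms(7) by (simp add: g_eq)
    from DERIV_compose_FDERIV[OF this gam_derivP[of V "X \<eta>" "J \<eta>" UNIV]]
    have "((\<lambda>P. lagr V F (X \<eta>) P) has_derivative (\<lambda>K. GP V (X \<eta>) (J \<eta>) K * F' (g \<eta>))) (at (J \<eta>))"
      by (simp add: lagr_def)
    from dirderiv_eq[OF this] show "dirderiv (\<lambda>P. lagr V F (X \<eta>) P) (J \<eta>) (Emat \<alpha> a) = F' (g \<eta>) * w \<alpha> a \<eta>"
      by (simp add: w_def)
  qed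

  have "\<forall>\<alpha> a. \<exists>D. (w \<alpha> a has_derivative D) (at \<xi>)"
  proof (intro allI)
    fix \<alpha> a
    have "GPj \<alpha> a differentiable (at (Phi \<xi>))"
      unfolding GPj_def by (rule GP_joint_diff[OF Vd'])
    then have "w \<alpha> a differentiable (at \<xi>)"
      unfolding w_comp using differentiable_compose[of "GPj \<alpha> a" Phi \<xi> UNIV] Phi_diff by blast
    then show "\<exists>D. (w \<alpha> a has_derivative D) (at \<xi>)" using differentiable_def by blast
  qed
  then obtain Dw where Dw: "\<And>\<alpha> a. (w \<alpha> a has_derivative Dw \<alpha> a) (at \<xi>)" by metis
  have Dwe: "\<And>\<alpha> a c. Dw \<alpha> a (axis c 1) = partial (w \<alpha> a) \<xi> c"
    by (simp add: partial_def dirderiv_eq[OF Dw])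

  have D2: "\<And>\<alpha> a. partial (\<lambda>\<eta>. dirderiv (\<lambda>P. lagr V F (X \<eta>) P) (J \<eta>) (Emat \<alpha> a)) \<xi> a
      = F'' (g \<xi>) * partial g \<xi> a * w \<alpha> a \<xi> + F' (g \<xi>) * partial (w \<alpha> a) \<xi> a"
  proof -
    fix \<alpha> a
    have "partial (\<lambda>\<eta>. dirderiv (\<lambda>P. lagr V F (X \<eta>) P) (J \<eta>) (Emat \<alpha> a)) \<xi> a
        = dirderiv (\<lambda>\<eta>. F' (g \<eta>) * w \<alpha> a \<eta>) \<xi> (axis a 1)"
      unfolding partial_def by (rule dirderiv_local[OF assms(1) \<xi>]) (simp add: Du)
    also have "\<dots> = F' (g \<xi>) * Dw \<alpha> a (axis a 1) + DG (Phi' (axis a 1)) * F'' (g \<xi>) * w \<alpha> a \<xi>"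
    proof -
      have "DERIV F' (g \<xi>) :> F'' (g \<xi>)" using assms(8) gpos by simp
      from DERIV_compose_FDERIV[OF this dg]
      have d1: "((\<lambda>\<eta>. F' (g \<eta>)) has_derivative (\<lambda>h. DG (Phi' h) * F'' (g \<xi>))) (at \<xi>)" .
      from has_derivative_mult[OF d1 Dw[of \<alpha> a]]
      show ?thesis by (simp add: dirderiv_eq)
    qed
    finally show "partial (\<lambda>\<eta>. dirderiv (\<lambda>P. lagr V F (X \<eta>) P) (J \<eta>) (Emat \<alpha> a)) \<xi> a
      = F'' (g \<xi>) * partial g \<xi> a * w \<alpha> a \<xi> + F' (g \<xi>) * partial (w \<alpha> a) \<xi> a"
      by (simp add: Dwe pg)
  qed

  have eqfun: "\<And>a. (\<lambda>\<eta>. \<Sum>\<alpha>\<in>UNIV. w \<alpha> a \<eta> * J \<eta> $ \<alpha> $ b) = (\<lambda>\<eta>. if a = b then 2 * g \<eta> else 0)"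
    by (rule ext) (simp add: w_def g_eq euler_identity)
  have Eu: "\<And>a. (\<Sum>\<alpha>\<in>UNIV. w \<alpha> a \<xi> * J \<xi> $ \<alpha> $ b) = (if a = b then 2 * g \<xi> else 0)"
    using eqfun by metis
  have D3: "\<And>a. (\<Sum>\<alpha>\<in>UNIV. partial (w \<alpha> a) \<xi> a * J \<xi> $ \<alpha> $ b + w \<alpha> a \<xi> * H \<alpha> b a)
      = (if a = b then 2 * partial g \<xi> a else 0)"
  proof -
    fix a
    have dl: "((\<lambda>\<eta>. \<Sum>\<alpha>\<in>UNIV. w \<alpha> a \<eta> * J \<eta> $ \<alpha> $ b) has_derivative
        (\<lambda>h. \<Sum>\<alpha>\<in>UNIV. w \<alpha> a \<xi> * DJ \<alpha> b h + Dw \<alpha> a h * J \<xi> $ \<alpha> $ b)) (at \<xi>)"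
      by (intro has_derivative_sum has_derivative_mult Dw DJ)
    have "partial (\<lambda>\<eta>. \<Sum>\<alpha>\<in>UNIV. w \<alpha> a \<eta> * J \<eta> $ \<alpha> $ b) \<xi> a
        = (\<Sum>\<alpha>\<in>UNIV. partial (w \<alpha> a) \<xi> a * J \<xi> $ \<alpha> $ b + w \<alpha> a \<xi> * H \<alpha> b a)"
      by (simp add: partial_def dirderiv_eq[OF dl] DJe Dwe[unfolded partial_def] add.commute mult.commute)
    moreover have "partial (\<lambda>\<eta>. if a = b then 2 * g \<eta> else 0) \<xi> a = (if a = b then 2 * partial g \<xi> a else 0)"
    proof (cases "a = b")
      case True
      have "((\<lambda>\<eta>. 2 * g \<eta>) has_derivative (\<lambda>h. 2 * DG (Phi' h))) (at \<xi>)"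
        by (rule has_derivative_mult_right[OF dg])
      then show ?thesis using True by (simp add: partial_def dirderiv_eq dirderiv_eq[OF dg])
    next
      case False
      then show ?thesis by (simp add: partial_def dirderiv_def)
    qed
    ultimately show "(\<Sum>\<alpha>\<in>UNIV. partial (w \<alpha> a) \<xi> a * J \<xi> $ \<alpha> $ b + w \<alpha> a \<xi> * H \<alpha> b a)
      = (if a = b then 2 * partial g \<xi> a else 0)" using eqfun[of a] by simp
  qed

  have EL: "\<And>\<alpha>. F' (g \<xi>) * DG (axis \<alpha> 1, 0)
      = (\<Sum>a\<in>UNIV. F'' (g \<xi>) * partial g \<xi> a * w \<alpha> a \<xi> + F' (g \<xi>) * partial (w \<alpha> a) \<xi> a)"
  proof -
    fix \<alpha>
    have "dirderiv (\<lambda>x. lagr V F x (J \<xi>)) (X \<xi>) (axis \<alpha> 1)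
       - (\<Sum>a\<in>UNIV. partial (\<lambda>\<eta>. dirderiv (\<lambda>P. lagr V F (X \<eta>) P) (J \<eta>) (Emat \<alpha> a)) \<xi> a) = 0"
      using assms(10) \<xi> unfolding euler_lagrange_def J_def Emat_def by blast
    then show "F' (g \<xi>) * DG (axis \<alpha> 1, 0)
      = (\<Sum>a\<in>UNIV. F'' (g \<xi>) * partial g \<xi> a * w \<alpha> a \<xi> + F' (g \<xi>) * partial (w \<alpha> a) \<xi> a)"
      by (simp add: D4 D2)
  qed

  define f1 where "f1 = F' (g \<xi>)"
  define f2 where "f2 = F'' (g \<xi>)"
  define \<gamma> where "\<gamma> = g \<xi>"
  define pa where "pa = (\<lambda>c. partial g \<xi> c)"
  define W where "W = (\<lambda>\<alpha> a. w \<alpha> a \<xi>)"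
  define Wd where "Wd = (\<lambda>\<alpha> a. partial (w \<alpha> a) \<xi> a)"
  define Jb where "Jb = (\<lambda>\<alpha>. J \<xi> $ \<alpha> $ b)"
  define A where "A = (\<lambda>\<alpha>. DG (axis \<alpha> 1, 0))"
  define T where "T = (\<Sum>\<alpha>\<in>UNIV. \<Sum>a\<in>UNIV. H \<alpha> a b * W \<alpha> a)"
  have EL': "\<And>\<alpha>. f1 * A \<alpha> = (\<Sum>a\<in>UNIV. f2 * pa a * W \<alpha> a + f1 * Wd \<alpha> a)"
    unfolding f1_def A_def f2_def pa_def W_def Wd_def by (rule EL)
  have D3': "\<And>a. (\<Sum>\<alpha>\<in>UNIV. Wd \<alpha> a * Jb \<alpha> + W \<alpha> a * H \<alpha> b a) = (if a = b then 2 * pa a else 0)"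
    unfolding Wd_def Jb_def W_def pa_def by (rule D3)
  have Eu': "\<And>a. (\<Sum>\<alpha>\<in>UNIV. W \<alpha> a * Jb \<alpha>) = (if a = b then 2 * \<gamma> else 0)"
    unfolding W_def Jb_def \<gamma>_def by (rule Eu)
  have D1': "pa b = (\<Sum>\<alpha>\<in>UNIV. Jb \<alpha> * A \<alpha>) + T"
    unfolding pa_def Jb_def A_def T_def W_def by (rule D1)
  have S1: "(\<Sum>\<alpha>\<in>UNIV. Jb \<alpha> * (f1 * A \<alpha>)) = f1 * pa b - f1 * T"
  proof -
    have "(\<Sum>\<alpha>\<in>UNIV. Jb \<alpha> * (f1 * A \<alpha>)) = f1 * (\<Sum>\<alpha>\<in>UNIV. Jb \<alpha> * A \<alpha>)"
      by (simp add: sum_distrib_left mult_ac)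
    also have "\<dots> = f1 * (pa b - T)" using D1' by simp
    finally show ?thesis by (simp add: right_diff_distrib)
  qed
  have S2: "(\<Sum>\<alpha>\<in>UNIV. Jb \<alpha> * (f1 * A \<alpha>))
      = (\<Sum>a\<in>UNIV. f2 * pa a * (\<Sum>\<alpha>\<in>UNIV. W \<alpha> a * Jb \<alpha>) + f1 * (\<Sum>\<alpha>\<in>UNIV. Wd \<alpha> a * Jb \<alpha>))"
  proof -
    have "(\<Sum>\<alpha>\<in>UNIV. Jb \<alpha> * (f1 * A \<alpha>)) = (\<Sum>\<alpha>\<in>UNIV. \<Sum>a\<in>UNIV. Jb \<alpha> * (f2 * pa a * W \<alpha> a + f1 * Wd \<alpha> a))"
      by (simp add: EL' sum_distrib_left)
    also have "\<dots> = (\<Sum>a\<in>UNIV. \<Sum>\<alpha>\<in>UNIV. Jb \<alpha> * (f2 * pa a * W \<alpha> a + f1 * Wd \<alpha> a))"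
      by (rule sum.swap)
    also have "\<dots> = (\<Sum>a\<in>UNIV. f2 * pa a * (\<Sum>\<alpha>\<in>UNIV. W \<alpha> a * Jb \<alpha>) + f1 * (\<Sum>\<alpha>\<in>UNIV. Wd \<alpha> a * Jb \<alpha>))"
      by (intro sum.cong refl) (simp add: sum_distrib_left sum.distrib algebra_simps)
    finally show ?thesis .
  qed
  have S3: "\<And>a. f2 * pa a * (\<Sum>\<alpha>\<in>UNIV. W \<alpha> a * Jb \<alpha>) + f1 * (\<Sum>\<alpha>\<in>UNIV. Wd \<alpha> a * Jb \<alpha>)
      = (if a = b then 2 * f2 * \<gamma> * pa b + 2 * f1 * pa b else 0) - f1 * (\<Sum>\<alpha>\<in>UNIV. W \<alpha> a * H \<alpha> b a)"
  proof -
    fix a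
    have "(\<Sum>\<alpha>\<in>UNIV. Wd \<alpha> a * Jb \<alpha>) = (if a = b then 2 * pa a else 0) - (\<Sum>\<alpha>\<in>UNIV. W \<alpha> a * H \<alpha> b a)"
      using D3'[of a] by (simp add: sum.distrib)
    note w1 = this
    show "f2 * pa a * (\<Sum>\<alpha>\<in>UNIV. W \<alpha> a * Jb \<alpha>) + f1 * (\<Sum>\<alpha>\<in>UNIV. Wd \<alpha> a * Jb \<alpha>)
      = (if a = b then 2 * f2 * \<gamma> * pa b + 2 * f1 * pa b else 0) - f1 * (\<Sum>\<alpha>\<in>UNIV. W \<alpha> a * H \<alpha> b a)"
      unfolding w1 Eu'[of a] by (cases "a = b") (simp_all add: algebra_simps)
  qed
  have T': "(\<Sum>a\<in>UNIV. \<Sum>\<alpha>\<in>UNIV. W \<alpha> a * H \<alpha> b a) = T"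
    unfolding T_def by (subst sum.swap) (simp add: Hsym mult.commute)
  have S4: "(\<Sum>\<alpha>\<in>UNIV. Jb \<alpha> * (f1 * A \<alpha>)) = (2 * f2 * \<gamma> * pa b + 2 * f1 * pa b) - f1 * T"
  proof -
    have "(\<Sum>\<alpha>\<in>UNIV. Jb \<alpha> * (f1 * A \<alpha>))
       = (\<Sum>a\<in>UNIV. (if a = b then 2 * f2 * \<gamma> * pa b + 2 * f1 * pa b else 0) - f1 * (\<Sum>\<alpha>\<in>UNIV. W \<alpha> a * H \<alpha> b a))"
      unfolding S2 by (simp add: S3)
    also have "\<dots> = (2 * f2 * \<gamma> * pa b + 2 * f1 * pa b) - f1 * (\<Sum>a\<in>UNIV. \<Sum>\<alpha>\<in>UNIV. W \<alpha> a * H \<alpha> b a)"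
      by (simp add: sum_subtractf sum_distrib_left)
    finally show ?thesis using T' by simp
  qed
  have fin: "f1 * pa b + 2 * f2 * \<gamma> * pa b = 0" using S1 S4 by linarith
  have "pa b * (2 * \<gamma> * f2 + f1) = 0"
  proof -
    have "pa b * (2 * \<gamma> * f2 + f1) = f1 * pa b + 2 * f2 * \<gamma> * pa b" by (simp add: algebra_simps)
    then show ?thesis using fin by simp
  qed
  then show "partial (gamma_v V X) \<xi> b *
           (2 * gamma_v V X \<xi> * F'' (gamma_v V X \<xi>) + F' (gamma_v V X \<xi>)) = 0"
    unfolding pa_def \<gamma>_def f2_def f1_def g_def .
qed

end
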